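(* Let $\alpha>0$. (i) For all $\Delta>0$, $$\int_0^{1/(1+\Delta)}\frac{\alpha^\alpha}{\Gamma(\alpha)}\frac{e^{-\alpha/u}}{u^{1+\alpha}}du\le\int_1^\infty\alpha^{1/2}\Delta\exp\Big\{-\frac{t^2}{4}(\alpha^{1/2}\Delta)^2\Big\}dt+\int_1^\infty(\alpha\Delta)^{1/2}\exp\Big(-\frac{t}{4}\alpha\Delta\Big)dt.$$ (ii) For all $\Delta>0$ and all $K>1+\Delta$, $$\int_{1+\Delta}^K\frac{\alpha^\alpha}{\Gamma(\alpha)}\frac{e^{-\alpha/u}}{u^{1+\alpha}}du\le K\int_{-\infty}^{-1}|t|\,\alpha^{1/2}\frac{\log(1+\Delta)}{1+\log K}\exp\Big[-\frac{|t|^2}{2}\alpha\frac{\{\log(1+\Delta)\}^2}{(1+\log K)^2}\Big]dt.$$ (iii) For all $K>0$, $$\int_K^\infty\frac{\alpha^\alpha}{\Gamma(\alpha)}\frac{e^{-\alpha/u}}{u^{1+\alpha}}du\le\min\Big\{\frac{\alpha^\alpha}{\Gamma(\alpha+1)}\frac{1}{K^\alpha},\ \frac{1}{\alpha^{1/2}}\frac{1}{(K/e)^\alpha}\Big\}.$$ *)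

theory Defs
  imports "HOL-Analysis.Analysis"
begin

definition invgamma_dens :: "real \<Rightarrow> real \<Rightarrow> real" where
  "invgamma_dens \<alpha> u = \<alpha> powr \<alpha> / Gamma \<alpha> * (exp (- \<alpha> / u) / u powr (1 + \<alpha>))"

end

theory Submission
  imports Defs "HOL-Real_Asymp.Real_Asymp"
begin


lemma ln_lower: fixes x :: real assumes "0 \<le> x" shows "x - x^2/2 \<le> ln (1+x)"
proof -
  have "(\<lambda>x. x - x^2/2 - ln (1+x)) x \<le> (\<lambda>x. x - x^2/2 - ln (1+x)) 0"
  proof (rule DERIV_nonpos_imp_nonincreasing[OF assms])
    fix y :: real assume y: "0 \<le> y" "y \<le> x"
    show "\<exists>d. DERIV (\<lambda>x. x - x^2/2 - ln (1+x)) y :> d \<and> d \<le> 0"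
      apply (rule exI[of _ "1 - y - 1/(1+y)"])
      using y apply (auto intro!: derivative_eq_intros simp: field_simps)
      done
  qed
  then show ?thesis by simp
qed

lemma exp_upper2: fixes x :: real assumes "0 \<le> x" shows "exp (-x) \<le> 1 - x + x^2/2"
proof -
  have "(\<lambda>x. exp (-x) - (1 - x + x^2/2)) x \<le> (\<lambda>x. exp (-x) - (1 - x + x^2/2)) 0"
  proof (rule DERIV_nonpos_imp_nonincreasing[OF assms])
    fix y :: real assume y: "0 \<le> y" "y \<le> x"
    show "\<exists>d. DERIV (\<lambda>x. exp (-x) - (1 - x + x^2/2)) y :> d \<and> d \<le> 0"
      apply (rule exI[of _ "- exp (-y) + 1 - y"])
      using y exp_ge_add_one_self[of "-y"] apply (auto intro!: derivative_eq_intros simp: field_simps)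
      done
  qed
  then show ?thesis by simp
qed

lemma exp_lower3: fixes x :: real assumes "0 \<le> x" shows "1 - x + x^2/2 - x^3/6 \<le> exp (-x)"
proof -
  have "(\<lambda>x. 1 - x + x^2/2 - x^3/6 - exp (-x)) x \<le> (\<lambda>x. 1 - x + x^2/2 - x^3/6 - exp (-x)) 0"
  proof (rule DERIV_nonpos_imp_nonincreasing[OF assms])
    fix y :: real assume y: "0 \<le> y" "y \<le> x"
    show "\<exists>d. DERIV (\<lambda>x. 1 - x + x^2/2 - x^3/6 - exp (-x)) y :> d \<and> d \<le> 0"
      apply (rule exI[of _ "- 1 + y - y^2/2 + exp (-y)"])
      using y exp_upper2[of y] apply (auto intro!: derivative_eq_intros simp: field_simps)
      done
  qed
  then show ?thesis by simp
qed

lemma ln_upper: fixes w :: real assumes "0 \<le> w" shows "ln (1+w) \<le> w - w^2/(2*(1+w))"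
proof -
  have "(\<lambda>w. ln (1+w) - (w - w^2/(2*(1+w)))) w \<le> (\<lambda>w. ln (1+w) - (w - w^2/(2*(1+w)))) 0"
  proof (rule DERIV_nonpos_imp_nonincreasing[OF assms])
    fix y :: real assume y: "0 \<le> y" "y \<le> w"
    show "\<exists>d. DERIV (\<lambda>w. ln (1+w) - (w - w^2/(2*(1+w)))) y :> d \<and> d \<le> 0"
      apply (rule exI[of _ "(-(y*y))/(2*(1+y)*(1+y))"])
      using y apply (intro conjI derivative_eq_intros refl)
      apply (auto simp: power2_eq_square)
      apply (simp add: divide_simps)
      apply (simp add: algebra_simps)
      done
  qed
  then show ?thesis by simp
qed

lemma g_lower: fixes y :: real assumes "0 \<le> y" shows "y^2/(2*(1+y)) \<le> exp (-y) + y - 1"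
proof -
  have "(\<lambda>y. 2 - y^2 - 2*(1+y)*exp(-y)) y \<le> (\<lambda>y. 2 - y^2 - 2*(1+y)*exp(-y)) 0"
  proof (rule DERIV_nonpos_imp_nonincreasing[OF assms])
    fix z :: real assume z: "0 \<le> z" "z \<le> y"
    have "exp (-z) \<le> 1" using z by simp
    then show "\<exists>d. DERIV (\<lambda>y. 2 - y^2 - 2*(1+y)*exp(-y)) z :> d \<and> d \<le> 0"
      apply (intro exI[of _ "- 2*z*(1 - exp (-z))"])
      using z mult_left_le[OF \<open>exp (-z) \<le> 1\<close> z(1)] apply (auto intro!: derivative_eq_intros simp: field_simps)
      done
  qed
  then have "2 - y^2 \<le> 2*(1+y)*exp(-y)" by simp
  then show ?thesis using assms by (simp add: field_simps power2_eq_square)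
qed


lemma gamma_lower:
  fixes \<alpha> :: real assumes ap: "\<alpha> > 0"
  shows "\<alpha> powr \<alpha> * sqrt \<alpha> \<le> Gamma (\<alpha> + 1) * exp \<alpha>"
proof -
  define s where "s = sqrt \<alpha>"
  have s: "s > 0" "s^2 = \<alpha>" using ap by (auto simp: s_def)
  define c where "c = \<alpha> powr \<alpha> * exp (-\<alpha>)"
  have c: "c > 0" using ap by (simp add: c_def)
  define P where "P = (\<lambda>u::real. 1 - u^2/2 + u^4/8 - u^6/48)"
  define R where "R = (\<lambda>u::real. u - u^3/6 + u^5/40 - u^7/336)"
  define q where "q = (\<lambda>t. c * P ((t - \<alpha>)/s))"
  define Q where "Q = (\<lambda>t. c * s * R ((t - \<alpha>)/s))"
  define b where "b = \<alpha> + 3/2 * s"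
  have ab: "\<alpha> \<le> b" using s by (simp add: b_def)
  have dQ: "(Q has_real_derivative q t) (at t)" for t
    unfolding Q_def q_def P_def R_def
    using s by (auto intro!: derivative_eq_intros simp: field_simps power_divide eval_nat_numeral)
  have int1: "(q has_integral (Q b - Q \<alpha>)) {\<alpha>..b}"
    apply (rule fundamental_theorem_of_calculus[OF ab])
    using dQ by (simp add: has_real_derivative_iff_has_vector_derivative has_vector_derivative_at_within)
  have Qv: "Q b - Q \<alpha> = c * s * R (3/2)"
    using s by (simp add: Q_def b_def R_def)
  have "R (3/2) \<ge> 1" by (simp add: R_def power_divide)
  then have Qge: "Q b - Q \<alpha> \<ge> c * s" using Qv c s by simp
  define g where "g = (\<lambda>t. if t \<in> {\<alpha>..b} then q t else 0)"
  have int2: "(g has_integral (Q b - Q \<alpha>)) {0..}"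
    apply (rule has_integral_on_superset[where S="{\<alpha>..b}"])
      apply (rule has_integral_eq[OF _ int1]) 
    using ap by (auto simp: g_def)
  have G: "((\<lambda>t. t powr \<alpha> / exp t) has_integral Gamma (\<alpha> + 1)) {0..}"
    using Gamma_integral_real[of "\<alpha>+1"] ap by simp
  have pw: "g t \<le> t powr \<alpha> / exp t" if t: "t \<in> {0..}" for t
  proof (cases "t \<in> {\<alpha>..b}")
    case False then show ?thesis using t by (auto simp: g_def)
  next
    case True
    define u where "u = (t - \<alpha>)/s"
    have u: "u \<ge> 0" using True s by (simp add: u_def)
    have "P u \<le> exp (-(u^2/2))"
      using exp_lower3[of "u^2/2"] by (simp add: P_def power_divide field_simps flip: power_mult)
    define x where "x = (t - \<alpha>)/\<alpha>"
    have x: "x \<ge> 0" "t = \<alpha> * (1+x)" using True ap by (auto simp: x_def field_simps)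
    have ux: "u^2/2 = \<alpha> * x^2/2"
      using s ap by (simp add: u_def x_def power_divide field_simps power2_eq_square)
    have "t powr \<alpha> = \<alpha> powr \<alpha> * exp (\<alpha> * ln (1+x))"
    proof -
      have "t powr \<alpha> = \<alpha> powr \<alpha> * (1+x) powr \<alpha>"
        unfolding x(2) using x ap by (intro powr_mult)
      also have "(1+x) powr \<alpha> = exp (\<alpha> * ln (1+x))"
        using x by (simp add: powr_def mult.commute)
      finally show ?thesis .
    qed
    also have "\<dots> \<ge> \<alpha> powr \<alpha> * exp (\<alpha> * (x - x^2/2))"
      using ln_lower[OF x(1)] ap by (intro mult_left_mono) auto
    finally have "t powr \<alpha> / exp t \<ge> \<alpha> powr \<alpha> * exp (\<alpha> * (x - x^2/2)) / exp t"
      by (simp add: divide_right_mono)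
    also have "\<alpha> powr \<alpha> * exp (\<alpha> * (x - x^2/2)) / exp t = c * exp (-(u^2/2))"
      unfolding ux c_def x(2) by (simp add: field_simps flip: exp_add exp_diff)
    finally have "c * exp (-(u^2/2)) \<le> t powr \<alpha> / exp t" .
    moreover have "c * P u \<le> c * exp (-(u^2/2))"
      using c \<open>P u \<le> _\<close> by simp
    ultimately show ?thesis using True by (simp add: g_def q_def u_def)
  qed
  have "Q b - Q \<alpha> \<le> Gamma (\<alpha> + 1)"
    by (rule has_integral_le[OF int2 G pw])
  then have "c * s \<le> Gamma (\<alpha> + 1)" using Qge by linarith
  then show ?thesis unfolding c_def s_def by (simp add: exp_minus field_simps)
qed


lemma set_int_nn:
  fixes f :: "real \<Rightarrow> real"
  assumes [measurable]: "f \<in> borel_measurable borel" and S[measurable]: "S \<in> sets borel"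
    and nn: "\<And>x. x \<in> S \<Longrightarrow> 0 \<le> f x"
  shows "(\<integral>x\<in>S. f x \<partial>lborel) = enn2real (\<integral>\<^sup>+x. ennreal (f x) * indicator S x \<partial>lborel)"
proof -
  have "(\<integral>x\<in>S. f x \<partial>lborel) = enn2real (\<integral>\<^sup>+x. ennreal (indicator S x *\<^sub>R f x) \<partial>lborel)"
    unfolding set_lebesgue_integral_def
    by (rule integral_eq_nn_integral) (auto simp: nn split: split_indicator)
  also have "(\<integral>\<^sup>+x. ennreal (indicator S x *\<^sub>R f x) \<partial>lborel) = (\<integral>\<^sup>+x. ennreal (f x) * indicator S x \<partial>lborel)"
    by (intro nn_integral_cong) (auto split: split_indicator)
  finally show ?thesis .
qed

lemma set_int_le_nn:
  fixes f :: "real \<Rightarrow> real"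
  assumes "f \<in> borel_measurable borel" "S \<in> sets borel"
    and nn: "\<And>x. x \<in> S \<Longrightarrow> 0 \<le> f x"
    and le: "(\<integral>\<^sup>+x. ennreal (f x) * indicator S x \<partial>lborel) \<le> ennreal B" and B: "0 \<le> B"
  shows "(\<integral>x\<in>S. f x \<partial>lborel) \<le> B"
  using set_int_nn[OF assms(1-3)] enn2real_mono[OF le] B by simp

lemma dens_meas[measurable]: "invgamma_dens \<alpha> \<in> borel_measurable borel"
  unfolding invgamma_dens_def by measurable

lemma dens_nonneg: "\<alpha> > 0 \<Longrightarrow> u \<ge> 0 \<Longrightarrow> invgamma_dens \<alpha> u \<ge> 0"
  unfolding invgamma_dens_def by simp

lemma part3:
  fixes \<alpha> K :: real assumes ap: "\<alpha> > 0" and K: "K > 0"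
  shows "(\<integral>u\<in>{K..}. invgamma_dens \<alpha> u \<partial>lborel)
            \<le> min (\<alpha> powr \<alpha> / Gamma (\<alpha> + 1) * (1 / K powr \<alpha>))
                   (1 / sqrt \<alpha> * (1 / (K / exp 1) powr \<alpha>))"
proof -
  define C where "C = \<alpha> powr \<alpha> / Gamma \<alpha>"
  have C: "C > 0" using ap by (simp add: C_def)
  define h where "h = (\<lambda>u::real. C * u powr (-\<alpha>-1))"
  define F where "F = (\<lambda>u::real. - C / \<alpha> * u powr (-\<alpha>))"
  have nnF: "(\<integral>\<^sup>+x. ennreal (h x) * indicator {K..} x \<partial>lborel) = 0 - F K"
  proof (rule nn_integral_FTC_atLeast)
    show "h \<in> borel_measurable borel" unfolding h_def by measurable
    fix x assume x: "K \<le> x"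
    then show "DERIV F x :> h x" using K ap unfolding F_def h_def
      by (auto intro!: derivative_eq_intros simp: field_simps)
    show "0 \<le> h x" using C unfolding h_def by simp
  next
    have "((\<lambda>u::real. u powr (-\<alpha>)) \<longlongrightarrow> 0) at_top"
      using ap by (intro tendsto_neg_powr filterlim_ident) auto
    then show "(F \<longlongrightarrow> 0) at_top" unfolding F_def
      by (rule tendsto_mult_left_zero tendsto_mult_right_zero)
  qed
  have le1: "(\<integral>u\<in>{K..}. invgamma_dens \<alpha> u \<partial>lborel) \<le> C / \<alpha> * K powr (-\<alpha>)"
  proof (rule set_int_le_nn)
    show "0 \<le> C / \<alpha> * K powr (-\<alpha>)" using C ap by simp
    show "\<And>x. x \<in> {K..} \<Longrightarrow> 0 \<le> invgamma_dens \<alpha> x" using K ap dens_nonneg by auto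
    have "(\<integral>\<^sup>+x. ennreal (invgamma_dens \<alpha> x) * indicator {K..} x \<partial>lborel)
          \<le> (\<integral>\<^sup>+x. ennreal (h x) * indicator {K..} x \<partial>lborel)"
    proof (intro nn_integral_mono)
      fix x show "ennreal (invgamma_dens \<alpha> x) * indicator {K..} x \<le> ennreal (h x) * indicator {K..} x"
      proof (cases "x \<ge> K")
        case True
        then have x: "x > 0" using K by simp
        have "exp (-\<alpha>/x) \<le> 1" using x ap by simp
        then have "invgamma_dens \<alpha> x \<le> C * (1 / x powr (1+\<alpha>))"
          unfolding invgamma_dens_def C_def using x ap
          by (intro mult_left_mono divide_right_mono) auto
        also have "\<dots> = h x" unfolding h_def using x
          by (simp add: powr_minus_divide[symmetric] algebra_simps) (metis minus_diff_commute minus_diff_eq uminus_add_conv_diff)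
        finally show ?thesis using True by (simp add: ennreal_leI)
      qed simp
    qed
    also have "\<dots> = ennreal (C / \<alpha> * K powr (-\<alpha>))" unfolding nnF F_def by simp
    finally show "(\<integral>\<^sup>+x. ennreal (invgamma_dens \<alpha> x) * indicator {K..} x \<partial>lborel) \<le> ennreal (C / \<alpha> * K powr (-\<alpha>))" .
  qed simp_all
  have G1: "Gamma (\<alpha>+1) = \<alpha> * Gamma \<alpha>"
    using ap by (metis Gamma_plus1 nonpos_Ints_nonpos not_le)
  have CG: "C / \<alpha> = \<alpha> powr \<alpha> / Gamma (\<alpha> + 1)"
    unfolding C_def using ap using G1 by (simp add: field_simps add.commute)
  have eq1: "C / \<alpha> * K powr (-\<alpha>) = \<alpha> powr \<alpha> / Gamma (\<alpha> + 1) * (1 / K powr \<alpha>)"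
    unfolding CG using K by (simp add: powr_minus_divide)
  have "\<alpha> powr \<alpha> / Gamma (\<alpha> + 1) \<le> exp \<alpha> / sqrt \<alpha>"
    using gamma_lower[OF ap] ap by (simp add: field_simps)
  then have "\<alpha> powr \<alpha> / Gamma (\<alpha> + 1) * (1 / K powr \<alpha>) \<le> exp \<alpha> / sqrt \<alpha> * (1 / K powr \<alpha>)"
    using K by (intro mult_right_mono) auto
  also have "\<dots> = 1 / sqrt \<alpha> * (1 / (K / exp 1) powr \<alpha>)"
    using K by (simp add: powr_def ln_div algebra_simps exp_diff)
  finally show ?thesis using le1 eq1 by simp
qed


lemma C_bound:
  fixes \<alpha> :: real assumes ap: "\<alpha> > 0"
  shows "\<alpha> powr \<alpha> / Gamma \<alpha> * exp (-\<alpha>) \<le> sqrt \<alpha>"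
proof -
  have G1: "Gamma (\<alpha>+1) = \<alpha> * Gamma \<alpha>"
    using ap by (metis Gamma_plus1 nonpos_Ints_nonpos not_le)
  have g: "\<alpha> powr \<alpha> * sqrt \<alpha> \<le> \<alpha> * Gamma \<alpha> * exp \<alpha>"
    using gamma_lower[OF ap] G1 by simp
  have "Gamma \<alpha> > 0" using ap by simp
  have g': "\<alpha> powr \<alpha> * sqrt \<alpha> \<le> (sqrt \<alpha> * sqrt \<alpha>) * Gamma \<alpha> * exp \<alpha>"
    using g ap by (metis abs_of_pos real_sqrt_mult_self)
  have "sqrt \<alpha> * \<alpha> powr \<alpha> \<le> sqrt \<alpha> * (sqrt \<alpha> * Gamma \<alpha> * exp \<alpha>)"
    using g' by (metis mult.commute mult.assoc)
  then have "\<alpha> powr \<alpha> \<le> sqrt \<alpha> * Gamma \<alpha> * exp \<alpha>"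
    using ap by (meson mult_left_le_imp_le real_sqrt_gt_zero)
  then show ?thesis using \<open>Gamma \<alpha> > 0\<close> by (simp add: exp_minus field_simps)
qed

lemma reflect_nn:
  fixes f :: "real \<Rightarrow> ennreal" assumes [measurable]: "f \<in> borel_measurable borel"
  shows "(\<integral>\<^sup>+x. f x \<partial>lborel) = (\<integral>\<^sup>+x. f (- x) \<partial>lborel)"
  using nn_integral_real_affine[OF assms, of "-1" 0] by simp



lemma exp_sq_lim: assumes "k > (0::real)" shows "((\<lambda>s. exp (-(s^2/2)*k)) \<longlongrightarrow> 0) at_top"
  using assms by real_asymp

lemma part2:
  fixes \<alpha> \<Delta> K :: real assumes ap: "\<alpha> > 0" and D: "\<Delta> > 0" and K: "K > 1 + \<Delta>"
  shows "(\<integral>u\<in>{1+\<Delta>..K}. invgamma_dens \<alpha> u \<partial>lborel)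
            \<le> K * (\<integral>t\<in>{..-1}. \<bar>t\<bar> * sqrt \<alpha> * (ln (1+\<Delta>) / (1 + ln K))
                   * exp (- (\<bar>t\<bar>^2/2) * \<alpha> * (ln (1+\<Delta>))^2 / (1 + ln K)^2) \<partial>lborel)"
proof -
  define L where "L = ln (1+\<Delta>)"
  define M where "M = ln K"
  have K0: "K > 0" using K D by simp
  have L: "L > 0" using D by (simp add: L_def)
  have LM: "L < M" using K D by (simp add: L_def M_def)
  have M1: "1 + M \<le> K" using ln_le_minus_one[OF K0] by (simp add: M_def)
  have M0: "M > 0" using L LM by simp
  define H where "H = (\<lambda>t::real. \<bar>t\<bar> * sqrt \<alpha> * (L / (1 + M)) * exp (- (\<bar>t\<bar>^2/2) * \<alpha> * L^2 / (1 + M)^2))"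
  have Hnn: "H t \<ge> 0" for t unfolding H_def using L M0 ap by simp
  have Hmeas[measurable]: "H \<in> borel_measurable borel" unfolding H_def by measurable
  define F where "F = (\<lambda>s::real. - (1+M)/(sqrt \<alpha> * L) * exp (- (s^2/2) * \<alpha> * L^2 / (1 + M)^2))"
  define k where "k = \<alpha> * L^2 / (1 + M)^2"
  have k: "k > 0" using ap L M0 by (simp add: k_def)
  have Fk: "F = (\<lambda>s. - (1+M)/(sqrt \<alpha> * L) * exp (- (s^2/2) * k))"
    unfolding F_def k_def by (simp add: field_simps)
  have NF: "(\<integral>\<^sup>+s. ennreal (H (-s)) * indicator {1..} s \<partial>lborel) = 0 - F 1"
  proof (rule nn_integral_FTC_atLeast)
    show "(\<lambda>s. H (-s)) \<in> borel_measurable borel" by measurable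
    fix x :: real assume x: "1 \<le> x"
    have H1: "H (-x) = x * sqrt \<alpha> * (L/(1+M)) * exp (-(x^2/2)*k)"
      unfolding H_def k_def using x by (simp add: field_simps)
    have gen0: "- N/(a * L) * (E * (-(2*x/2)*(a*a*L^2/N^2))) = x * a * (L/N) * E"
      if "a > 0" "N > 0" for a E N using that L by (simp add: field_simps power2_eq_square)
    have gen: "- (1+M)/(a * L) * (E * (-(2*x/2)*(a*a*L^2/(1+M)^2))) = x * a * (L/(1+M)) * E"
      if "a > 0" for a E using gen0[of a "1+M" E] that M0 by simp
    have sa: "sqrt \<alpha> * sqrt \<alpha> = \<alpha>" using ap by simp
    have "DERIV F x :> - (1+M)/(sqrt \<alpha> * L) * (exp (-(x^2/2)*k) * (-(2*x/2)*k))"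
      unfolding Fk using ap L by (auto intro!: derivative_eq_intros)
    moreover have "- (1+M)/(sqrt \<alpha> * L) * (exp (-(x^2/2)*k) * (-(2*x/2)*k)) = H (-x)"
      unfolding H1 using gen[of "sqrt \<alpha>" "exp (-(x^2/2)*k)", unfolded sa, folded k_def] ap by simp
    ultimately show "DERIV F x :> H (-x)" by simp
    show "0 \<le> H (-x)" by (rule Hnn)
  next
    show "(F \<longlongrightarrow> 0) at_top" unfolding Fk
      by (rule tendsto_mult_right_zero[OF exp_sq_lim[OF k]])
  qed
  have N: "(\<integral>\<^sup>+t. ennreal (H t) * indicator {..-1} t \<partial>lborel) = ennreal (- F 1)"
  proof -
    have "(\<integral>\<^sup>+t. ennreal (H t) * indicator {..-1} t \<partial>lborel) = (\<integral>\<^sup>+t. ennreal (H (-t)) * indicator {..-1} (-t) \<partial>lborel)"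
      by (rule reflect_nn) measurable
    also have "\<dots> = (\<integral>\<^sup>+s. ennreal (H (-s)) * indicator {1..} s \<partial>lborel)"
      by (intro nn_integral_cong) (auto split: split_indicator)
    finally show ?thesis using NF by simp
  qed
  have "0 \<le> (1+M)/(sqrt \<alpha> * L) * exp (- (1^2/2) * \<alpha> * L^2/(1+M)^2)"
    using ap L M0 by (intro mult_nonneg_nonneg divide_nonneg_nonneg) auto
  then have F1: "- F 1 \<ge> 0" unfolding F_def
    by simp (smt (verit) minus_divide_left mult_minus_left)
  have RHS: "(\<integral>t\<in>{..-1}. H t \<partial>lborel) = - F 1"
    using F1 set_int_nn[OF Hmeas _ Hnn, of "{..-1}"] N by simp
  define C where "C = \<alpha> powr \<alpha> / Gamma \<alpha>"
  have C0: "C > 0" using ap by (simp add: C_def)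
  have CB: "C * exp (-\<alpha>) \<le> sqrt \<alpha>" using C_bound[OF ap] by (simp add: C_def)
  have pw: "invgamma_dens \<alpha> (exp (s*L)) * (L * exp (s*L)) \<le> K * H (-s)"
    if s: "1 \<le> s" "s \<le> M/L" for s
  proof -
    define y where "y = s * L"
    have y: "L \<le> y" "y \<le> M" using s L by (auto simp: y_def field_simps)
    have y0: "y \<ge> 0" using y L by simp
    define E0 where "E0 = exp (-\<alpha>*(exp (-y)+y-1))"
    define E1 where "E1 = exp (-\<alpha>*y^2/(2*(1+M)^2))"
    have e1: "invgamma_dens \<alpha> (exp y) * (L * exp y) = (C * exp (-\<alpha>)) * L * E0"
    proof -
      have p: "exp y powr (1+\<alpha>) = exp ((1+\<alpha>)*y)" by (simp add: powr_def)
      have q: "-\<alpha> / exp y = -\<alpha> * exp (-y)" by (simp add: exp_minus field_simps)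
      have r: "exp (-\<alpha> * exp (-y)) / exp ((1+\<alpha>)*y) * exp y = exp (-\<alpha> * exp (-y) - (1+\<alpha>)*y + y)"
        by (simp add: exp_diff exp_add)
      have t: "exp (-\<alpha>) * E0 = exp (-\<alpha> + -\<alpha>*(exp (-y)+y-1))" unfolding E0_def by (rule exp_add[symmetric])
      have u: "-\<alpha> * exp (-y) - (1+\<alpha>)*y + y = -\<alpha> + -\<alpha>*(exp (-y)+y-1)" by (simp add: algebra_simps)
      have "invgamma_dens \<alpha> (exp y) * (L * exp y) = C * L * (exp (-\<alpha> * exp (-y)) / exp ((1+\<alpha>)*y) * exp y)"
        unfolding invgamma_dens_def C_def[symmetric] p q by (simp add: field_simps)
      also have "\<dots> = C * L * (exp (-\<alpha>) * E0)" by (simp only: r u t[symmetric])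
      also have "\<dots> = (C * exp (-\<alpha>)) * L * E0" by (simp only: mult_ac)
      finally show ?thesis .
    qed
    have e3: "E0 \<le> E1"
    proof -
      have "1 + y \<le> 1 + M" using y by simp
      also have "\<dots> \<le> (1+M)^2" using M0 by (simp add: power2_eq_square)
      finally have "y^2/(2*(1+M)^2) \<le> y^2/(2*(1+y))"
        using y0 by (intro divide_left_mono mult_pos_pos) auto
      also have "\<dots> \<le> exp (-y)+y-1" by (rule g_lower[OF y0])
      finally have "\<alpha> * (y^2/(2*(1+M)^2)) \<le> \<alpha> * (exp (-y)+y-1)"
        using ap by (intro mult_left_mono) auto
      then show ?thesis unfolding E0_def E1_def by simp
    qed
    have e4: "H (-s) = s * sqrt \<alpha> * (L/(1+M)) * E1"
      unfolding H_def E1_def y_def using s by (simp add: power_mult_distrib field_simps)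
    have e5: "sqrt \<alpha> * L \<le> K * (s * sqrt \<alpha> * (L/(1+M)))"
    proof -
      have "1 + M \<le> K * s" using M1 s K0 by (metis mult_le_cancel_left1 order_trans less_le_not_le mult.commute)
      then have "1 \<le> K * s / (1+M)" using M0 by simp
      then have "sqrt \<alpha> * L * 1 \<le> sqrt \<alpha> * L * (K * s / (1+M))"
        using ap L by (intro mult_left_mono) auto
      then show ?thesis by (simp add: field_simps)
    qed
    have "invgamma_dens \<alpha> (exp y) * (L * exp y) \<le> sqrt \<alpha> * L * E0"
      unfolding e1 using CB L by (intro mult_right_mono) (auto simp: E0_def)
    also have "\<dots> \<le> sqrt \<alpha> * L * E1" using e3 ap L by (intro mult_left_mono) auto
    also have "\<dots> \<le> K * (s * sqrt \<alpha> * (L/(1+M))) * E1" using e5 by (intro mult_right_mono) (auto simp: E1_def)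
    also have "\<dots> = K * H (-s)" unfolding e4 by simp
    finally show ?thesis unfolding y_def .
  qed
  have sub: "(\<integral>\<^sup>+x. ennreal (invgamma_dens \<alpha> x * indicator {exp (1*L)..exp (M/L*L)} x) \<partial>lborel)
      = (\<integral>\<^sup>+x. ennreal (invgamma_dens \<alpha> (exp (x*L)) * (L * exp (x*L)) * indicator {1..M/L} x) \<partial>lborel)"
  proof (rule nn_integral_substitution[where g="\<lambda>s. exp (s*L)" and g'="\<lambda>s. L * exp (s*L)"])
    show "set_borel_measurable borel {exp (1 * L)..exp (M / L * L)} (invgamma_dens \<alpha>)"
      unfolding set_borel_measurable_def by measurable
    show "\<And>x. x \<in> {1..M / L} \<Longrightarrow> ((\<lambda>s. exp (s * L)) has_real_derivative L * exp (x * L)) (at x)"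
      by (auto intro!: derivative_eq_intros)
    show "continuous_on {1..M / L} (\<lambda>s. L * exp (s * L))" by (intro continuous_intros)
    show "\<And>x. x \<in> {1..M / L} \<Longrightarrow> 0 \<le> L * exp (x * L)" using L by simp
    show "1 \<le> M / L" using L LM by simp
  qed
  have eL: "exp (1*L) = 1 + \<Delta>" "exp (M/L*L) = K" using L D K0 by (auto simp: L_def M_def)
  have "(\<integral>\<^sup>+x. ennreal (invgamma_dens \<alpha> x) * indicator {1+\<Delta>..K} x \<partial>lborel)
      = (\<integral>\<^sup>+x. ennreal (invgamma_dens \<alpha> x * indicator {exp (1*L)..exp (M/L*L)} x) \<partial>lborel)"
    unfolding eL by (intro nn_integral_cong) (auto split: split_indicator)
  also have "\<dots> = (\<integral>\<^sup>+x. ennreal (invgamma_dens \<alpha> (exp (x*L)) * (L * exp (x*L)) * indicator {1..M/L} x) \<partial>lborel)"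
    by (rule sub)
  also have "\<dots> \<le> (\<integral>\<^sup>+x. ennreal K * (ennreal (H (-x)) * indicator {1..} x) \<partial>lborel)"
  proof (intro nn_integral_mono)
    fix x show "ennreal (invgamma_dens \<alpha> (exp (x*L)) * (L * exp (x*L)) * indicator {1..M/L} x)
        \<le> ennreal K * (ennreal (H (-x)) * indicator {1..} x)"
    proof (cases "x \<in> {1..M/L}")
      case True
      then have "invgamma_dens \<alpha> (exp (x*L)) * (L * exp (x*L)) \<le> K * H (-x)" using pw by auto
      then have "ennreal (invgamma_dens \<alpha> (exp (x*L)) * (L * exp (x*L))) \<le> ennreal (K * H (-x))"
        by (rule ennreal_leI)
      then show ?thesis using True K0 Hnn[of "-x"] by (simp add: ennreal_mult)
    qed simp
  qed
  also have "\<dots> = ennreal K * (\<integral>\<^sup>+x. ennreal (H (-x)) * indicator {1..} x \<partial>lborel)"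
    by (rule nn_integral_cmult) measurable
  also have "\<dots> = ennreal (K * (- F 1))" unfolding NF using K0 F1 by (simp add: ennreal_mult[symmetric])
  finally have main: "(\<integral>u\<in>{1+\<Delta>..K}. invgamma_dens \<alpha> u \<partial>lborel) \<le> K * (- F 1)"
    by (intro set_int_le_nn) (use K0 F1 ap D dens_nonneg mult_nonneg_nonpos[of K "F 1"] in auto)
  then show ?thesis using RHS unfolding H_def L_def M_def by simp
qed


lemma pw1:
  fixes \<alpha> \<Delta> s :: real assumes ap: "\<alpha> > 0" and D: "\<Delta> > 0" and s: "s \<ge> 1"
  defines "x \<equiv> 1 + s * \<Delta>"
  shows "invgamma_dens \<alpha> (1/x) * (\<Delta> / x^2)
     \<le> sqrt \<alpha> * \<Delta> * exp (- (s^2/4) * (sqrt \<alpha> * \<Delta>)^2) + sqrt (\<alpha> * \<Delta>) * exp (- (s/4) * \<alpha> * \<Delta>)"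
proof -
  define C where "C = \<alpha> powr \<alpha> / Gamma \<alpha>"
  have C0: "C > 0" using ap by (simp add: C_def)
  have CB: "C * exp (-\<alpha>) \<le> sqrt \<alpha>" using C_bound[OF ap] by (simp add: C_def)
  define w where "w = s * \<Delta>"
  have w: "w > 0" "w \<ge> \<Delta>" using s D by (auto simp: w_def)
  have x: "x = 1 + w" "x > 0" using w by (auto simp: x_def w_def)
  define lx where "lx = ln x"
  have e1: "invgamma_dens \<alpha> (1/x) * (\<Delta> / x^2) = (C * exp (-\<alpha>)) * \<Delta> * exp (-\<alpha> * (w - lx)) / x"
  proof -
    have p: "(1/x) powr (1+\<alpha>) = exp (- ((1+\<alpha>) * lx))" using x by (simp add: powr_def lx_def ln_div)
    have q: "-\<alpha> / (1/x) = -\<alpha> * x" by simp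
    have xx: "x = exp lx" using x by (simp add: lx_def)
    have x2: "x^2 = exp (2 * lx)"
    proof -
      have "exp (2*lx) = exp (lx + lx)" by simp
      also have "\<dots> = exp lx * exp lx" by (rule exp_add)
      finally show ?thesis by (simp add: xx[symmetric] power2_eq_square)
    qed
    have "invgamma_dens \<alpha> (1/x) * (\<Delta> / x^2) = C * \<Delta> * (exp (-\<alpha> * x) / exp (- ((1+\<alpha>) * lx)) / exp (2 * lx))"
      unfolding invgamma_dens_def C_def[symmetric] p q x2 by (simp add: field_simps)
    also have "exp (-\<alpha> * x) / exp (- ((1+\<alpha>) * lx)) / exp (2 * lx) = exp (-\<alpha> * x + (1+\<alpha>) * lx - 2 * lx)"
      by (simp only: exp_diff exp_add exp_minus) (simp add: divide_inverse)
    also have "-\<alpha> * x + (1+\<alpha>) * lx - 2 * lx = -\<alpha> + -\<alpha> * (w - lx) - lx" unfolding x(1) by (simp add: algebra_simps)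
    also have "exp (-\<alpha> + -\<alpha> * (w - lx) - lx) = exp (-\<alpha>) * exp (-\<alpha> * (w - lx)) / x"
      unfolding xx by (simp only: exp_diff exp_add)
    finally show ?thesis by (simp add: mult_ac times_divide_eq_right)
  qed
  have hb: "w - lx \<ge> w^2/(2*(1+w))" using ln_upper[of w] w unfolding lx_def x(1) by simp
  have G1nn: "0 \<le> sqrt \<alpha> * \<Delta> * exp (- (s^2/4) * (sqrt \<alpha> * \<Delta>)^2)" using ap D by simp
  have G2nn: "0 \<le> sqrt (\<alpha> * \<Delta>) * exp (- (s/4) * \<alpha> * \<Delta>)" using ap D by simp
  have st1: "invgamma_dens \<alpha> (1/x) * (\<Delta> / x^2) \<le> sqrt \<alpha> * (\<Delta> / x) * exp (-\<alpha> * (w^2/(2*(1+w))))"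
  proof -
    have "invgamma_dens \<alpha> (1/x) * (\<Delta> / x^2) = (C * exp (-\<alpha>)) * ((\<Delta> / x) * exp (-\<alpha> * (w - lx)))"
      unfolding e1 by simp
    also have "\<dots> \<le> sqrt \<alpha> * ((\<Delta> / x) * exp (-\<alpha> * (w - lx)))"
      using CB D x by (intro mult_right_mono) auto
    also have "\<dots> \<le> sqrt \<alpha> * ((\<Delta> / x) * exp (-\<alpha> * (w^2/(2*(1+w)))))"
      using hb ap D x mult_left_mono[OF hb, of \<alpha>] by (intro mult_left_mono) auto
    finally show ?thesis by simp
  qed
  show ?thesis
  proof (cases "w \<le> 1")
    case True
    have ineq: "w^2/4 \<le> w^2/(2*(1+w))" using True w by (intro divide_left_mono) auto
    have "exp (-\<alpha> * (w^2/(2*(1+w)))) \<le> exp (-\<alpha> * (w^2/4))"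
      using mult_left_mono[OF ineq, of \<alpha>] ap by (simp only: exp_le_cancel_iff) simp
    moreover have "\<Delta> / x \<le> \<Delta>" using x w D by (simp add: divide_le_eq)
    ultimately have "sqrt \<alpha> * (\<Delta> / x) * exp (-\<alpha> * (w^2/(2*(1+w)))) \<le> sqrt \<alpha> * \<Delta> * exp (-\<alpha> * (w^2/4))"
      using ap D x by (intro mult_mono) auto
    also have "\<dots> = sqrt \<alpha> * \<Delta> * exp (- (s^2/4) * (sqrt \<alpha> * \<Delta>)^2)"
      using ap by (simp add: w_def power_mult_distrib)
    finally show ?thesis using st1 G2nn by linarith
  next
    case False
    have ineq: "w/4 \<le> w^2/(2*(1+w))" using False w by (simp add: field_simps power2_eq_square)
    have "exp (-\<alpha> * (w^2/(2*(1+w)))) \<le> exp (-\<alpha> * (w/4))"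
      using mult_left_mono[OF ineq, of \<alpha>] ap by (simp only: exp_le_cancel_iff) simp
    moreover have "sqrt \<alpha> * (\<Delta> / x) \<le> sqrt (\<alpha> * \<Delta>)"
    proof -
      have sD: "sqrt \<Delta> \<le> x"
      proof (cases "\<Delta> \<le> 1")
        case True then have "sqrt \<Delta> \<le> 1" by simp
        then show ?thesis using x w by linarith
      next
        case False then have "sqrt \<Delta> \<le> \<Delta>" by (simp add: real_sqrt_le_iff' power2_eq_square)
        then show ?thesis using x w by linarith
      qed
      have "\<Delta> = sqrt \<Delta> * sqrt \<Delta>" using D by simp
      then have "\<Delta> / x \<le> sqrt \<Delta>" using sD x D
        by (metis divide_le_eq mult_left_mono real_sqrt_ge_zero less_imp_le mult.commute)
      then have "sqrt \<alpha> * (\<Delta> / x) \<le> sqrt \<alpha> * sqrt \<Delta>" by (intro mult_left_mono) (use ap in auto)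
      then show ?thesis by (simp add: real_sqrt_mult)
    qed
    ultimately have "sqrt \<alpha> * (\<Delta> / x) * exp (-\<alpha> * (w^2/(2*(1+w)))) \<le> sqrt (\<alpha> * \<Delta>) * exp (-\<alpha> * (w/4))"
      using ap D x by (intro mult_mono) auto
    also have "\<dots> = sqrt (\<alpha> * \<Delta>) * exp (- (s/4) * \<alpha> * \<Delta>)"
      by (simp add: w_def field_simps)
    finally show ?thesis using st1 G1nn by linarith
  qed
qed
lemma exp_lin_lim: assumes "k > (0::real)" shows "((\<lambda>t. exp (-(t/4)*k)) \<longlongrightarrow> 0) at_top"
  using assms by real_asymp

lemma nn_exp_tail:
  fixes c k :: real assumes c: "c \<ge> 0" and k: "k > 0"
  shows "(\<integral>\<^sup>+t. ennreal (c * exp (-(t/4)*k)) * indicator {1..} t \<partial>lborel) = ennreal (4*c/k * exp (-(1/4)*k))"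
proof -
  define F where "F = (\<lambda>t::real. - (4*c/k) * exp (-(t/4)*k))"
  have "(\<integral>\<^sup>+t. ennreal (c * exp (-(t/4)*k)) * indicator {1..} t \<partial>lborel) = 0 - F 1"
  proof (rule nn_integral_FTC_atLeast)
    show "(\<lambda>t. c * exp (-(t/4)*k)) \<in> borel_measurable borel" by measurable
    fix x :: real assume "1 \<le> x"
    show "DERIV F x :> c * exp (-(x/4)*k)" unfolding F_def using k
      by (auto intro!: derivative_eq_intros simp: field_simps)
    show "0 \<le> c * exp (-(x/4)*k)" using c by simp
  next
    show "(F \<longlongrightarrow> 0) at_top" unfolding F_def
      by (rule tendsto_mult_right_zero[OF exp_lin_lim[OF k]])
  qed
  then show ?thesis by (simp add: F_def)
qed

lemma part1:
  fixes \<alpha> \<Delta> :: real assumes ap: "\<alpha> > 0" and D: "\<Delta> > 0"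
  shows "(\<integral>u\<in>{0<..1/(1+\<Delta>)}. invgamma_dens \<alpha> u \<partial>lborel)
            \<le> (\<integral>t\<in>{1..}. sqrt \<alpha> * \<Delta> * exp (- (t^2/4) * (sqrt \<alpha> * \<Delta>)^2) \<partial>lborel)
             + (\<integral>t\<in>{1..}. sqrt (\<alpha> * \<Delta>) * exp (- (t/4) * \<alpha> * \<Delta>) \<partial>lborel)"
proof -
  define G1 where "G1 = (\<lambda>t::real. sqrt \<alpha> * \<Delta> * exp (- (t^2/4) * (sqrt \<alpha> * \<Delta>)^2))"
  define G2 where "G2 = (\<lambda>t::real. sqrt (\<alpha> * \<Delta>) * exp (- (t/4) * \<alpha> * \<Delta>))"
  have G1nn: "G1 t \<ge> 0" for t using ap D by (simp add: G1_def)
  have G2nn: "G2 t \<ge> 0" for t using ap D by (simp add: G2_def)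
  have [measurable]: "G1 \<in> borel_measurable borel" unfolding G1_def by measurable
  have [measurable]: "G2 \<in> borel_measurable borel" unfolding G2_def by measurable
  define N1 where "N1 = (\<integral>\<^sup>+t. ennreal (G1 t) * indicator {1..} t \<partial>lborel)"
  define N2 where "N2 = (\<integral>\<^sup>+t. ennreal (G2 t) * indicator {1..} t \<partial>lborel)"
  define a where "a = sqrt \<alpha> * \<Delta>"
  have a: "a > 0" using ap D by (simp add: a_def)
  have "N1 \<le> (\<integral>\<^sup>+t. ennreal (a * exp (-(t/4)*a^2)) * indicator {1..} t \<partial>lborel)"
    unfolding N1_def
  proof (intro nn_integral_mono)
    fix t :: real
    show "ennreal (G1 t) * indicator {1..} t \<le> ennreal (a * exp (-(t/4)*a^2)) * indicator {1..} t"
    proof (cases "t \<ge> 1")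
      case True
      then have "t \<le> t^2" by (simp add: power2_eq_square)
      then have "(t/4)*a^2 \<le> (t^2/4)*a^2" using a by (intro mult_right_mono) auto
      then have "G1 t \<le> a * exp (-(t/4)*a^2)" unfolding G1_def a_def[symmetric] using a by simp
      then show ?thesis using True by (simp add: ennreal_leI)
    qed simp
  qed
  also have "\<dots> < \<infinity>" using nn_exp_tail[of a "a^2"] a by simp
  finally have N1f: "N1 < \<infinity>" .
  have "N2 = (\<integral>\<^sup>+t. ennreal (sqrt (\<alpha> * \<Delta>) * exp (-(t/4)*(\<alpha> * \<Delta>))) * indicator {1..} t \<partial>lborel)"
    unfolding N2_def G2_def by (simp add: mult.assoc)
  also have "\<dots> < \<infinity>" using nn_exp_tail[of "sqrt (\<alpha> * \<Delta>)" "\<alpha> * \<Delta>"] ap D by simp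
  finally have N2f: "N2 < \<infinity>" .
  have R1: "(\<integral>t\<in>{1..}. G1 t \<partial>lborel) = enn2real N1" unfolding N1_def
    by (rule set_int_nn) (auto simp: G1nn)
  have R2: "(\<integral>t\<in>{1..}. G2 t \<partial>lborel) = enn2real N2" unfolding N2_def
    by (rule set_int_nn) (auto simp: G2nn)
  define b where "b = 1/(1+\<Delta>)"
  have b: "b > 0" "b \<le> 1" using D by (auto simp: b_def)
  define f where "f = invgamma_dens \<alpha>"
  have [measurable]: "f \<in> borel_measurable borel" unfolding f_def by measurable
  define I where "I = (\<lambda>n::nat. {b/(real n + 1)..b})"
  have I_meas[measurable]: "I n \<in> sets borel" for n unfolding I_def by auto
  have piece: "(\<integral>\<^sup>+u. ennreal (f u) * indicator (I n) u \<partial>lborel) \<le> N1 + N2" for n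
  proof -
    define \<epsilon> where "\<epsilon> = b/(real n + 1)"
    have \<epsilon>: "\<epsilon> > 0" "\<epsilon> \<le> b" using b by (auto simp: \<epsilon>_def divide_le_eq field_simps)
    define t1 where "t1 = (1 - 1/\<epsilon>)/\<Delta>"
    have "1/b \<le> 1/\<epsilon>" using \<epsilon> b by (intro divide_left_mono) auto
    then have "1 + \<Delta> \<le> 1/\<epsilon>" using D by (simp add: b_def)
    then have t1: "t1 \<le> -1" using D by (simp add: t1_def divide_le_eq)
    define g where "g = (\<lambda>t::real. 1/(1 - t*\<Delta>))"
    define g' where "g' = (\<lambda>t::real. \<Delta>/(1 - t*\<Delta>)^2)"
    have pos: "1 - t*\<Delta> > 0" if "t \<le> -1" for t
    proof -
      have "t*\<Delta> \<le> -1*\<Delta>" using that D by (intro mult_right_mono) auto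
      then show ?thesis using D by simp
    qed
    have gt1: "g t1 = \<epsilon>" using D \<epsilon> by (simp add: g_def t1_def)
    have gm1: "g (-1) = b" by (simp add: g_def b_def)
    have sub: "(\<integral>\<^sup>+x. ennreal (f x * indicator {g t1..g (-1)} x) \<partial>lborel)
        = (\<integral>\<^sup>+x. ennreal (f (g x) * g' x * indicator {t1..-1} x) \<partial>lborel)"
    proof (rule nn_integral_substitution)
      show "set_borel_measurable borel {g t1..g (- 1)} f"
        unfolding set_borel_measurable_def by measurable
      show "(g has_real_derivative g' x) (at x)" if "x \<in> {t1..-1}" for x
      proof -
        have "1 - x*\<Delta> \<noteq> 0" using pos[of x] that by auto
        then show ?thesis unfolding g_def g'_def
          by (auto intro!: derivative_eq_intros simp: power2_eq_square)
      qed
      show "continuous_on {t1..-1} g'" unfolding g'_def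
        using pos by (intro continuous_intros) (auto, fastforce)
      show "0 \<le> g' x" if "x \<in> {t1..-1}" for x unfolding g'_def using D by simp
      show "t1 \<le> -1" by (rule t1)
    qed
    have "(\<integral>\<^sup>+u. ennreal (f u) * indicator (I n) u \<partial>lborel)
        = (\<integral>\<^sup>+x. ennreal (f x * indicator {g t1..g (-1)} x) \<partial>lborel)"
      unfolding gt1 gm1 I_def \<epsilon>_def by (intro nn_integral_cong) (auto split: split_indicator)
    also have "\<dots> = (\<integral>\<^sup>+x. ennreal (f (g x) * g' x * indicator {t1..-1} x) \<partial>lborel)" by (rule sub)
    also have "\<dots> \<le> (\<integral>\<^sup>+x. ennreal (G1 (-x) + G2 (-x)) * indicator {..-1} x \<partial>lborel)"
    proof (intro nn_integral_mono)
      fix x :: real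
      show "ennreal (f (g x) * g' x * indicator {t1..-1} x) \<le> ennreal (G1 (-x) + G2 (-x)) * indicator {..-1} x"
      proof (cases "x \<in> {t1..-1}")
        case True
        have e: "1 + -x * \<Delta> = 1 - x*\<Delta>" by simp
        have "f (g x) * g' x \<le> G1 (-x) + G2 (-x)"
          using pw1[OF ap D, of "-x"] True unfolding e f_def g_def g'_def G1_def G2_def by simp
        then show ?thesis using True by (simp add: ennreal_leI)
      qed simp
    qed
    also have "\<dots> = (\<integral>\<^sup>+s. ennreal (G1 (-(-s)) + G2 (-(-s))) * indicator {..-1} (-s) \<partial>lborel)"
    proof (rule reflect_nn)
      have [measurable]: "{..-1::real} \<in> sets borel" by simp
      show "(\<lambda>x. ennreal (G1 (-x) + G2 (-x)) * indicator {..-1} x) \<in> borel_measurable borel" by measurable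
    qed
    also have "\<dots> = (\<integral>\<^sup>+s. ennreal (G1 s + G2 s) * indicator {..-1} (-s) \<partial>lborel)" by simp
    also have "\<dots> = (\<integral>\<^sup>+s. ennreal (G1 s) * indicator {1..} s + ennreal (G2 s) * indicator {1..} s \<partial>lborel)"
      using G1nn G2nn by (intro nn_integral_cong) (auto split: split_indicator)
    also have "\<dots> = N1 + N2" unfolding N1_def N2_def by (rule nn_integral_add) measurable
    finally show ?thesis .
  qed
  have sup: "(\<integral>\<^sup>+u. ennreal (f u) * indicator {0<..b} u \<partial>lborel)
      = (\<integral>\<^sup>+u. (SUP n. ennreal (f u) * indicator (I n) u) \<partial>lborel)"
  proof (intro nn_integral_cong)
    fix u :: real
    show "ennreal (f u) * indicator {0<..b} u = (SUP n. ennreal (f u) * indicator (I n) u)"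
    proof (cases "u \<in> {0<..b}")
      case True
      obtain n :: nat where n: "b/u \<le> real n" using real_arch_simple by blast
      have "b \<le> u * real n" using n True by (simp add: divide_le_eq mult.commute)
      also have "\<dots> \<le> u * (real n + 1)" using True by simp
      finally have "b/(real n + 1) \<le> u" by (simp add: divide_le_eq mult.commute)
      then have uin: "u \<in> I n" using True unfolding I_def by auto
      show ?thesis
      proof (rule antisym)
        show "ennreal (f u) * indicator {0<..b} u \<le> (SUP n. ennreal (f u) * indicator (I n) u)"
          using uin True by (intro SUP_upper2[of n]) auto
        show "(SUP n. ennreal (f u) * indicator (I n) u) \<le> ennreal (f u) * indicator {0<..b} u"
          using True by (intro SUP_least) (auto split: split_indicator)
      qed
    next
      case False
      have "u \<notin> I n" for n
      proof
        assume "u \<in> I n"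
        moreover have "b/(real n + 1) > 0" using b by simp
        ultimately show False using False unfolding I_def by auto
      qed
      then show ?thesis using False by simp
    qed
  qed
  also have "\<dots> = (SUP n. (\<integral>\<^sup>+u. ennreal (f u) * indicator (I n) u \<partial>lborel))"
  proof (rule nn_integral_monotone_convergence_SUP)
    show "incseq (\<lambda>n u. ennreal (f u) * indicator (I n) u)"
    proof (rule incseq_SucI, rule le_funI)
      fix n u
      have "b/(real (Suc n) + 1) \<le> b/(real n + 1)" using b by (intro divide_left_mono) auto
      then show "ennreal (f u) * indicator (I n) u \<le> ennreal (f u) * indicator (I (Suc n)) u"
        unfolding I_def by (auto split: split_indicator)
    qed
  qed measurable
  also have "\<dots> \<le> N1 + N2" by (rule SUP_least) (rule piece)
  finally have main: "(\<integral>\<^sup>+u. ennreal (f u) * indicator {0<..b} u \<partial>lborel) \<le> ennreal (enn2real N1 + enn2real N2)"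
    using N1f N2f by simp
  have "(\<integral>u\<in>{0<..b}. f u \<partial>lborel) \<le> enn2real N1 + enn2real N2"
    by (rule set_int_le_nn[OF _ _ _ main]) (auto simp: f_def dens_nonneg ap)
  then show ?thesis unfolding R1[unfolded G1_def] R2[unfolded G2_def] b_def f_def .
qed

theorem lemmaS6:
  fixes \<alpha> :: real
  assumes "\<alpha> > 0"
  shows "(\<forall>\<Delta>>0.
            (\<integral>u\<in>{0<..1/(1+\<Delta>)}. invgamma_dens \<alpha> u \<partial>lborel)
            \<le> (\<integral>t\<in>{1..}. sqrt \<alpha> * \<Delta> * exp (- (t^2/4) * (sqrt \<alpha> * \<Delta>)^2) \<partial>lborel)
             + (\<integral>t\<in>{1..}. sqrt (\<alpha> * \<Delta>) * exp (- (t/4) * \<alpha> * \<Delta>) \<partial>lborel))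
       \<and> (\<forall>\<Delta>>0. \<forall>K>1+\<Delta>.
            (\<integral>u\<in>{1+\<Delta>..K}. invgamma_dens \<alpha> u \<partial>lborel)
            \<le> K * (\<integral>t\<in>{..-1}. \<bar>t\<bar> * sqrt \<alpha> * (ln (1+\<Delta>) / (1 + ln K))
                   * exp (- (\<bar>t\<bar>^2/2) * \<alpha> * (ln (1+\<Delta>))^2 / (1 + ln K)^2) \<partial>lborel))
       \<and> (\<forall>K>0.
            (\<integral>u\<in>{K..}. invgamma_dens \<alpha> u \<partial>lborel)
            \<le> min (\<alpha> powr \<alpha> / Gamma (\<alpha> + 1) * (1 / K powr \<alpha>))
                   (1 / sqrt \<alpha> * (1 / (K / exp 1) powr \<alpha>)))"
  using part1[OF assms] part2[OF assms] part3[OF assms] by blast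

end
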